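(* In the graph process described in the context, for every $v\in[n]$, $$\bigl|\{u\in[n]: d_{H^{(q)}}(v,u)<h\}\bigr|\le 2\delta^{h-1}n.$$
   Context: Fix integers $n\ge1$, $h\ge2$, a real $\delta\in(0,1)$ with $\delta n^{1/(h-1)}>3$, and $S=\{1,\ldots,\lfloor\delta n\rfloor\}\subseteq[n]$. Let $(a_1,b_1),\ldots,(a_q,b_q)$ be a sequence of unordered pairs of distinct points of $[n]$, no pair repeated. All graphs are unweighted undirected on vertex set $[n]$; $d_G$ is the shortest-path (edge-count) distance ($\infty$ if disconnected), $\deg_G$ the degree. Graph process: $E_G^{(0)}=\{(u,v): u,v\in[n]\setminus S, u\ne v\}$, $E_H^{(0)}=\emptyset$, $G^{(i)}=([n],E_G^{(i)})$, $H^{(i)}=([n],E_H^{(i)})$. For $i=1,\ldots,q$: if $d_{G^{(i-1)}}(a_i,b_i)\le h$, choose a shortest $a_i$-$b_i$ path $P_i$ in $G^{(i-1)}$, set $E_H^{(i)}=E_H^{(i-1)}\cup\{\text{edges of }P_i\}$ and $E_G^{(i)}=E_G^{(i-1)}\setminus\{(u,v)\in E_G^{(i-1)}\setminus E_H^{(i)}: \deg_{H^{(i)}}(u)\ge\delta n^{1/(h-1)}-2\text{ or }\deg_{H^{(i)}}(v)\ge\delta n^{1/(h-1)}-2\}$; otherwise set $E_H^{(i)}=E_H^{(i-1)}$, $E_G^{(i)}=E_G^{(i-1)}$. *)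

theory Defs
  imports Complex_Main "HOL-Library.Extended_Nat"
begin

text \<open>Graphs on vertex set [n] = {1..n} are represented by their edge sets:
  sets of two-element sets of naturals.\<close>

definition gp_vertices :: "nat \<Rightarrow> nat set" where
  "gp_vertices n = {1..n}"

definition is_walk :: "nat set set \<Rightarrow> nat list \<Rightarrow> nat \<Rightarrow> nat \<Rightarrow> bool" where
  "is_walk E p a b \<longleftrightarrow> p \<noteq> [] \<and> hd p = a \<and> last p = b \<and>
     (\<forall>i. Suc i < length p \<longrightarrow> {p ! i, p ! Suc i} \<in> E)"

text \<open>Shortest-path (edge-count) distance; infinity if no walk exists.\<close>
definition gdist :: "nat set set \<Rightarrow> nat \<Rightarrow> nat \<Rightarrow> enat" where
  "gdist E a b = Inf {enat (length p - 1) | p. is_walk E p a b}"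

definition walk_edges :: "nat list \<Rightarrow> nat set set" where
  "walk_edges p = {{p ! i, p ! Suc i} | i. Suc i < length p}"

definition gdeg :: "nat set set \<Rightarrow> nat \<Rightarrow> nat" where
  "gdeg E v = card {u. {u, v} \<in> E}"

definition gp_threshold :: "nat \<Rightarrow> nat \<Rightarrow> real \<Rightarrow> real" where
  "gp_threshold n h \<delta> = \<delta> * real n powr (1 / (real h - 1)) - 2"

definition gp_S :: "nat \<Rightarrow> real \<Rightarrow> nat set" where
  "gp_S n \<delta> = {1..nat \<lfloor>\<delta> * real n\<rfloor>}"

definition gp_EG0 :: "nat \<Rightarrow> real \<Rightarrow> nat set set" where
  "gp_EG0 n \<delta> = {{u, v} | u v. u \<in> gp_vertices n - gp_S n \<delta> \<and>
                                 v \<in> gp_vertices n - gp_S n \<delta> \<and> u \<noteq> v}"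

text \<open>One step of the process; states are pairs (E_G, E_H). The choice of the
  shortest path is arbitrary (nondeterministic).\<close>
inductive gp_step :: "nat \<Rightarrow> nat \<Rightarrow> real \<Rightarrow> nat \<times> nat \<Rightarrow>
    nat set set \<times> nat set set \<Rightarrow> nat set set \<times> nat set set \<Rightarrow> bool" where
  path: "gdist EG a b \<le> enat h \<Longrightarrow> is_walk EG p a b \<Longrightarrow>
         enat (length p - 1) = gdist EG a b \<Longrightarrow>
         EH' = EH \<union> walk_edges p \<Longrightarrow>
         EG' = EG - {e \<in> EG - EH'. \<exists>w\<in>e. real (gdeg EH' w) \<ge> gp_threshold n h \<delta>} \<Longrightarrow>
         gp_step n h \<delta> (a, b) (EG, EH) (EG', EH')"
| nopath: "\<not> gdist EG a b \<le> enat h \<Longrightarrow> gp_step n h \<delta> (a, b) (EG, EH) (EG, EH)"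

inductive gp_run :: "nat \<Rightarrow> nat \<Rightarrow> real \<Rightarrow> (nat \<times> nat) list \<Rightarrow>
    nat set set \<times> nat set set \<Rightarrow> nat set set \<times> nat set set \<Rightarrow> bool" where
  Nil: "gp_run n h \<delta> [] s s"
| Cons: "gp_step n h \<delta> x s s' \<Longrightarrow> gp_run n h \<delta> xs s' s'' \<Longrightarrow> gp_run n h \<delta> (x # xs) s s''"

end

theory Submission imports Defs begin

lemma shortcut:
  assumes w: "is_walk E p a b" and ij: "i < j" "j < length p" "p!i = p!j"
  shows "is_walk E (take i p @ drop j p) a b"
proof -
  let ?q = "take i p @ drop j p"
  from w have ne: "p \<noteq> []" and hd: "hd p = a" and lst: "last p = b"
    and E: "\<And>k. Suc k < length p \<Longrightarrow> {p!k, p!Suc k} \<in> E" by (auto simp: is_walk_def)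
  have len: "length ?q = i + (length p - j)" using ij by simp
  have nth: "?q ! k = p ! (if k < i then k else k - i + j)" if "k < length ?q" for k
    using that ij by (auto simp: nth_append min_def add.commute)
  have q_ne: "?q \<noteq> []" using ij by simp
  have "hd ?q = a"
  proof -
    have "hd ?q = ?q ! 0" using q_ne by (simp add: hd_conv_nth)
    also have "\<dots> = p ! 0" using nth[of 0] ij q_ne by (cases "i = 0") auto
    finally show ?thesis using hd ne by (simp add: hd_conv_nth)
  qed
  moreover have "last ?q = b" using ij lst by simp
  moreover have "{?q!k, ?q!Suc k} \<in> E" if k: "Suc k < length ?q" for k
  proof -
    consider "Suc k < i" | "Suc k = i" | "k \<ge> i" by linarith
    then show ?thesis
    proof cases
      case 1 then show ?thesis using nth[of k] nth[of "Suc k"] k E[of k] ij by auto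
    next
      case 2 then show ?thesis using nth[of k] nth[of "Suc k"] k E[of k] ij by auto
    next
      case 3
      have "Suc (k - i + j) < length p" using 3 k len by linarith
      then show ?thesis using nth[of k] nth[of "Suc k"] k E[of "k - i + j"] ij 3
        by (auto simp: Suc_diff_le)
    qed
  qed
  ultimately show ?thesis using q_ne by (auto simp: is_walk_def)
qed

lemma shortest_distinct:
  assumes w: "is_walk E p a b" and s: "enat (length p - 1) = gdist E a b"
  shows "distinct p"
proof (rule ccontr)
  assume "\<not> distinct p"
  then obtain i j where ij: "i < j" "j < length p" "p!i = p!j"
    by (metis distinct_conv_nth linorder_neqE_nat)
  let ?q = "take i p @ drop j p"
  have wq: "is_walk E ?q a b" using shortcut[OF w ij] .
  have "gdist E a b \<le> enat (length ?q - 1)" unfolding gdist_def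
    using wq by (blast intro: Inf_lower)
  moreover have "length ?q - 1 < length p - 1" using ij by simp
  ultimately show False using s by (metis enat_ord_simps(2) leD)
qed

lemma walk_edges_sub: "is_walk E p a b \<Longrightarrow> walk_edges p \<subseteq> E"
  by (auto simp: is_walk_def walk_edges_def)

lemma nbr_walk_card:
  assumes d: "distinct p"
  shows "card {u. {u, w} \<in> walk_edges p} \<le> 2"
proof (cases "w \<in> set p")
  case False
  then have "{u. {u, w} \<in> walk_edges p} = {}"
    by (auto simp: walk_edges_def doubleton_eq_iff)
  then show ?thesis by simp
next
  case True
  then obtain j where j: "j < length p" "p!j = w" by (metis in_set_conv_nth)
  have "{u. {u, w} \<in> walk_edges p} \<subseteq> {p!(j-1), p!Suc j}"
  proof
    fix u assume "u \<in> {u. {u, w} \<in> walk_edges p}"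
    then obtain i where i: "Suc i < length p" "{u, w} = {p!i, p!Suc i}"
      by (auto simp: walk_edges_def)
    then consider "u = p!i" "w = p!Suc i" | "u = p!Suc i" "w = p!i"
      by (auto simp: doubleton_eq_iff)
    then show "u \<in> {p!(j-1), p!Suc j}"
    proof cases
      case 1
      then have "Suc i = j" using d j i by (metis Suc_lessD distinct_conv_nth)
      then show ?thesis using 1 by auto
    next
      case 2
      then have "i = j" using d j i by (metis Suc_lessD distinct_conv_nth)
      then show ?thesis using 2 by auto
    qed
  qed
  then have "card {u. {u, w} \<in> walk_edges p} \<le> card {p!(j-1), p!Suc j}"
    by (rule card_mono[rotated]) simp
  also have "\<dots> \<le> 2" by (simp add: card_insert_le_m1)
  finally show ?thesis .
qed

lemma nbr_walk_finite: "finite {u. {u, w} \<in> walk_edges p}"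
proof (rule finite_subset[of _ "set p"])
  show "{u. {u, w} \<in> walk_edges p} \<subseteq> set p"
    by (auto simp: walk_edges_def doubleton_eq_iff)
qed simp

definition good :: "nat \<Rightarrow> nat set \<Rightarrow> bool" where
  "good n e \<longleftrightarrow> (\<exists>a b. e = {a, b} \<and> a \<in> {1..n} \<and> b \<in> {1..n})"

definition inv :: "nat \<Rightarrow> nat \<Rightarrow> real \<Rightarrow> nat set set \<times> nat set set \<Rightarrow> bool" where
  "inv n h \<delta> s \<longleftrightarrow> (\<forall>e\<in>fst s. good n e) \<and> (\<forall>e\<in>snd s. good n e) \<and>
     (\<forall>e\<in>fst s - snd s. \<forall>w\<in>e. real (gdeg (snd s) w) < gp_threshold n h \<delta>) \<and>
     (\<forall>w. real (gdeg (snd s) w) < gp_threshold n h \<delta> + 2)"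

lemma step_inv:
  assumes st: "gp_step n h \<delta> x (EG, EH) (EG', EH')" and iv: "inv n h \<delta> (EG, EH)"
  shows "inv n h \<delta> (EG', EH')"
  using st
proof cases
  case (path a b p)
  let ?thr = "gp_threshold n h \<delta>"
  have we: "walk_edges p \<subseteq> EG" using walk_edges_sub[OF path(3)] .
  have dp: "distinct p" using shortest_distinct[OF path(3) path(4)] .
  have g1: "\<forall>e\<in>EG'. good n e" using iv path by (auto simp: inv_def)
  have g2: "\<forall>e\<in>EH'. good n e" using iv path we by (auto simp: inv_def)
  have g3: "\<forall>e\<in>EG' - EH'. \<forall>w\<in>e. real (gdeg EH' w) < ?thr"
    using path by (auto simp: not_less)
  have g4: "real (gdeg EH' w) < ?thr + 2" for w
  proof -
    let ?N = "{u. {u, w} \<in> EH}" and ?M = "{u. {u, w} \<in> walk_edges p - EH}"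
    have eq: "{u. {u, w} \<in> EH'} = ?N \<union> ?M" using path by auto
    show ?thesis
    proof (cases "?M = {}")
      case True
      then have "{u. {u, w} \<in> EH'} = ?N" using eq by blast
      then show ?thesis using iv by (auto simp: inv_def gdeg_def)
    next
      case False
      then obtain u where "{u, w} \<in> EG - EH" using we by auto
      then have lt: "real (gdeg EH w) < ?thr" using iv by (auto simp: inv_def)
      have "card ?M \<le> card {u. {u, w} \<in> walk_edges p}"
        by (rule card_mono[OF nbr_walk_finite]) auto
      also have "\<dots> \<le> 2" using nbr_walk_card[OF dp] .
      finally have "card ?M \<le> 2" .
      then have "gdeg EH' w \<le> gdeg EH w + 2"
        unfolding gdeg_def eq using card_Un_le[of ?N ?M] by linarith
      then show ?thesis using lt by linarith
    qed
  qed
  show ?thesis using g1 g2 g3 g4 path by (simp add: inv_def)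
next
  case nopath
  then show ?thesis using iv by simp
qed

lemma run_inv: "gp_run n h \<delta> ps s s' \<Longrightarrow> inv n h \<delta> s \<Longrightarrow> inv n h \<delta> s'"
proof (induction rule: gp_run.induct)
  case (Nil s) then show ?case .
next
  case (Cons x s s' xs s'')
  then show ?case by (metis prod.collapse step_inv)
qed

lemma init_inv:
  assumes "gp_threshold n h \<delta> > 0"
  shows "inv n h \<delta> (gp_EG0 n \<delta>, {})"
  using assms by (auto simp: inv_def good_def gp_EG0_def gp_vertices_def gdeg_def)

definition W :: "nat set set \<Rightarrow> nat \<Rightarrow> nat \<Rightarrow> nat set" where
  "W E v k = {u. \<exists>p. is_walk E p v u \<and> length p = Suc k}"

lemma W_0: "W E v 0 \<subseteq> {v}"
  by (auto simp: W_def is_walk_def hd_conv_nth last_conv_nth)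

lemma W_Suc: "W E v (Suc k) \<subseteq> (\<Union>x\<in>W E v k. {u. {u, x} \<in> E})"
proof
  fix u assume "u \<in> W E v (Suc k)"
  then obtain p where w: "is_walk E p v u" and l: "length p = Suc (Suc k)" by (auto simp: W_def)
  let ?q = "butlast p"
  have lq: "length ?q = Suc k" using l by simp
  then have qne: "?q \<noteq> []" by (metis list.size(3) nat.distinct(1))
  have "hd ?q = ?q ! 0" using qne by (simp add: hd_conv_nth)
  also have "\<dots> = p ! 0" using lq by (simp add: nth_butlast)
  also have "\<dots> = v" using w by (auto simp: is_walk_def hd_conv_nth)
  finally have h1: "hd ?q = v" .
  have "last ?q = ?q ! k" using qne lq by (simp add: last_conv_nth)
  also have "\<dots> = p ! k" using lq by (simp add: nth_butlast)
  finally have h2: "last ?q = p ! k" .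
  have wq: "is_walk E ?q v (p ! k)"
    using w lq qne h1 h2 unfolding is_walk_def
    by (auto simp: nth_butlast)
  moreover have "length ?q = Suc k" using l by simp
  ultimately have "p ! k \<in> W E v k" by (auto simp: W_def)
  moreover have "{p ! k, p ! Suc k} \<in> E" using w l by (auto simp: is_walk_def)
  moreover have "u = p ! Suc k" using w l by (auto simp: is_walk_def last_conv_nth)
  ultimately show "u \<in> (\<Union>x\<in>W E v k. {u. {u, x} \<in> E})" by (auto simp: insert_commute)
qed

lemma nbr_sub: "\<forall>e\<in>E. good n e \<Longrightarrow> {u. {u, x} \<in> E} \<subseteq> {1..n}"
proof
  fix u assume "\<forall>e\<in>E. good n e" "u \<in> {u. {u, x} \<in> E}"
  then obtain a b where "{u, x} = {a, b}" "a \<in> {1..n}" "b \<in> {1..n}" by (auto simp: good_def)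
  then show "u \<in> {1..n}" by (auto simp: doubleton_eq_iff)
qed

lemma W_sub: assumes g: "\<forall>e\<in>E. good n e" shows "W E v k \<subseteq> insert v {1..n}"
proof (cases k)
  case 0 then show ?thesis using W_0 by blast
next
  case (Suc m) then show ?thesis using W_Suc[of E v m] nbr_sub[OF g] by blast
qed

lemma W_card:
  assumes g: "\<forall>e\<in>E. good n e" and d: "\<forall>x. real (gdeg E x) \<le> D" and D: "0 \<le> D"
  shows "real (card (W E v k)) \<le> D ^ k"
proof (induction k)
  case 0
  have "card (W E v 0) \<le> card {v}" by (rule card_mono) (auto simp: W_0)
  then show ?case by simp
next
  case (Suc k)
  have fW: "finite (W E v k)" using W_sub[OF g] by (rule finite_subset) simp
  have fU: "finite (\<Union>x\<in>W E v k. {u. {u, x} \<in> E})"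
    using fW nbr_sub[OF g] by (meson finite_UN_I finite_atLeastAtMost finite_subset)
  have "card (W E v (Suc k)) \<le> card (\<Union>x\<in>W E v k. {u. {u, x} \<in> E})"
    by (rule card_mono[OF fU W_Suc])
  also have "\<dots> \<le> (\<Sum>x\<in>W E v k. card {u. {u, x} \<in> E})" by (rule card_UN_le[OF fW])
  finally have "real (card (W E v (Suc k))) \<le> (\<Sum>x\<in>W E v k. real (gdeg E x))"
    unfolding gdeg_def by (metis of_nat_le_iff of_nat_sum)
  also have "\<dots> \<le> (\<Sum>x\<in>W E v k. D)" by (rule sum_mono) (use d in auto)
  also have "\<dots> = real (card (W E v k)) * D" by simp
  also have "\<dots> \<le> D ^ k * D" using Suc D by (rule mult_right_mono)
  finally show ?case by (simp add: mult.commute)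
qed

lemma ball_sub: "{u\<in>{1..n}. gdist E v u < enat h} \<subseteq> (\<Union>k<h. W E v k)"
proof
  fix u assume "u \<in> {u\<in>{1..n}. gdist E v u < enat h}"
  then have "gdist E v u < enat h" by simp
  then obtain p where w: "is_walk E p v u" and l: "enat (length p - 1) < enat h"
    unfolding gdist_def Inf_less_iff by auto
  then have "p \<noteq> []" by (simp add: is_walk_def)
  then have "length p = Suc (length p - 1)" by simp
  then show "u \<in> (\<Union>k<h. W E v k)" using w l by (auto simp: W_def)
qed

lemma geom: "(2::real) \<le> D \<Longrightarrow> (\<Sum>k<Suc m. D ^ k) \<le> 2 * D ^ m"
proof (induction m)
  case 0 then show ?case by simp
next
  case (Suc m)
  have "(\<Sum>k<Suc (Suc m). D ^ k) = (\<Sum>k<Suc m. D ^ k) + D ^ Suc m" by simp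
  also have "\<dots> \<le> 2 * D ^ m + D ^ Suc m" using Suc by simp
  also have "2 * D ^ m \<le> D ^ Suc m" using Suc.prems
    by (simp add: mult_right_mono)
  finally show ?case by simp
qed

theorem mainTheorem7:
  fixes n h :: nat and \<delta> :: real and ps :: "(nat \<times> nat) list"
    and EG EH :: "nat set set"
  assumes "n \<ge> 1" and "h \<ge> 2" and "0 < \<delta>" and "\<delta> < 1"
    and "\<delta> * real n powr (1 / (real h - 1)) > 3"
    and "\<forall>(a, b) \<in> set ps. a \<in> {1..n} \<and> b \<in> {1..n} \<and> a \<noteq> b"
    and "distinct (map (\<lambda>(a, b). {a, b}) ps)"
    and "gp_run n h \<delta> ps (gp_EG0 n \<delta>, {}) (EG, EH)"
  shows "\<forall>v \<in> {1..n}. real (card {u \<in> {1..n}. gdist EH v u < enat h}) \<le> 2 * \<delta> ^ (h - 1) * real n"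
proof
  fix v assume v: "v \<in> {1..n}"
  define D where "D = \<delta> * real n powr (1 / (real h - 1))"
  have D3: "D > 3" using assms(5) by (simp add: D_def)
  have thr: "gp_threshold n h \<delta> = D - 2" by (simp add: gp_threshold_def D_def)
  have iv: "inv n h \<delta> (EG, EH)"
    by (rule run_inv[OF assms(8) init_inv]) (use thr D3 in simp)
  have g: "\<forall>e\<in>EH. good n e" using iv by (simp add: inv_def)
  have d: "\<forall>x. real (gdeg EH x) \<le> D" using iv thr by (auto simp: inv_def less_imp_le)
  have fW: "finite (W EH v k)" for k using W_sub[OF g] by (rule finite_subset) simp
  have "card {u \<in> {1..n}. gdist EH v u < enat h} \<le> card (\<Union>k<h. W EH v k)"
    by (rule card_mono[OF _ ball_sub]) (use fW in auto)
  also have "\<dots> \<le> (\<Sum>k<h. card (W EH v k))" by (rule card_UN_le) simp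
  finally have "real (card {u \<in> {1..n}. gdist EH v u < enat h}) \<le> (\<Sum>k<h. real (card (W EH v k)))"
    by (metis of_nat_le_iff of_nat_sum)
  also have "\<dots> \<le> (\<Sum>k<h. D ^ k)"
    by (rule sum_mono) (use W_card[OF g d] D3 in auto)
  also have "\<dots> = (\<Sum>k<Suc (h - 1). D ^ k)" using assms(2) by simp
  also have "\<dots> \<le> 2 * D ^ (h - 1)" using geom D3 by simp
  also have "D ^ (h - 1) = \<delta> ^ (h - 1) * real n"
  proof -
    have "(real n powr (1 / (real h - 1))) ^ (h - 1) = real n powr (real (h - 1) * (1 / (real h - 1)))"
      using assms(1) by (subst powr_power) auto
    also have "real (h - 1) * (1 / (real h - 1)) = 1" using assms(2) by (simp add: of_nat_diff)
    finally have "(real n powr (1 / (real h - 1))) ^ (h - 1) = real n" using assms(1) by simp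
    then show ?thesis by (simp add: D_def power_mult_distrib)
  qed
  finally show "real (card {u \<in> {1..n}. gdist EH v u < enat h}) \<le> 2 * \<delta> ^ (h - 1) * real n"
    by simp
qed

end
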